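(* Let $G$ be a finite simple graph with $\alpha:=\alpha(G)\ge 2$. Let $C$ be a vertex cover of $G$ such that $S:=V(G)\setminus C$ satisfies $1\le |S|\le \alpha-1$. Let $H:=G(C)$ be the $C$-suspension of $G$. Then $G$ is pseudo-Gorenstein$^{*}$ if and only if $H$ is pseudo-Gorenstein$^{*}$.
   Context: A vertex cover of $G$ is a set $C\subseteq V(G)$ meeting every edge. For $\varnothing\ne C\subseteq V(G)$, the $C$-suspension $G(C)$ is the graph obtained from $G$ by adding a new vertex $z$ adjacent exactly to the vertices of $C$. For a finite simple graph $G$ on vertex set $[N]$, let $R=K[x_1,\dots,x_N]$ ($K$ a field) and $I(G)$ the edge ideal generated by $x_ix_j$, $\{i,j\}\in E(G)$. Let $\alpha(G)$ be the independence number (equal to $\dim R/I(G)$). Write the Hilbert series of $R/I(G)$ uniquely as $(h_0+\dots+h_st^s)/(1-t)^{\alpha(G)}$ with $h_s\ne 0$, and $\mathfrak a(G)=s-\alpha(G)$. $G$ is pseudo-Gorenstein$^{*}$ if $h_s=1$ and $\mathfrak a(G)=0$. *)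

theory Defs
  imports "HOL-Library.Multiset" "HOL-Computational_Algebra.Formal_Power_Series"
begin

definition simple_graph :: "'a set \<Rightarrow> 'a set set \<Rightarrow> bool" where
  "simple_graph V E \<longleftrightarrow> finite V \<and> (\<forall>e\<in>E. e \<subseteq> V \<and> card e = 2)"

definition indep :: "'a set set \<Rightarrow> 'a set \<Rightarrow> bool" where
  "indep E A \<longleftrightarrow> (\<forall>e\<in>E. \<not> e \<subseteq> A)"

definition indep_num :: "'a set \<Rightarrow> 'a set set \<Rightarrow> nat" where
  "indep_num V E = Max (card ` {A. A \<subseteq> V \<and> indep E A})"

definition vertex_cover :: "'a set \<Rightarrow> 'a set set \<Rightarrow> 'a set \<Rightarrow> bool" where
  "vertex_cover V E C \<longleftrightarrow> C \<subseteq> V \<and> (\<forall>e\<in>E. e \<inter> C \<noteq> {})"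

text \<open>Edges of the C-suspension G(C) with new vertex z (vertex set insert z V).\<close>
definition suspension_edges :: "'a set set \<Rightarrow> 'a set \<Rightarrow> 'a \<Rightarrow> 'a set set" where
  "suspension_edges E C z = E \<union> {{z, c} | c. c \<in> C}"

text \<open>Hilbert function of R/I(G): dim_K of the degree-d part, which has as K-basis the
  monomials of degree d (multisets of vertices) not in I(G), i.e. whose support is independent.\<close>
definition hilbert_fun :: "'a set \<Rightarrow> 'a set set \<Rightarrow> nat \<Rightarrow> nat" where
  "hilbert_fun V E d = card {m. set_mset m \<subseteq> V \<and> indep E (set_mset m) \<and> size m = d}"

definition hilbert_series :: "'a set \<Rightarrow> 'a set set \<Rightarrow> int fps" where
  "hilbert_series V E = Abs_fps (\<lambda>d. int (hilbert_fun V E d))"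

definition h_fps :: "'a set \<Rightarrow> 'a set set \<Rightarrow> int fps" where
  "h_fps V E = hilbert_series V E * (1 - fps_X) ^ indep_num V E"

definition h_deg :: "'a set \<Rightarrow> 'a set set \<Rightarrow> nat" where
  "h_deg V E = Max {i. fps_nth (h_fps V E) i \<noteq> 0}"

definition a_inv :: "'a set \<Rightarrow> 'a set set \<Rightarrow> int" where
  "a_inv V E = int (h_deg V E) - int (indep_num V E)"

definition pseudo_gorenstein_star :: "'a set \<Rightarrow> 'a set set \<Rightarrow> bool" where
  "pseudo_gorenstein_star V E \<longleftrightarrow> fps_nth (h_fps V E) (h_deg V E) = 1 \<and> a_inv V E = 0"

end

theory Submission
  imports Defs
begin
unbundle fps_syntax

definition T :: "nat \<Rightarrow> nat \<Rightarrow> int fps" where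
  "T k m = fps_X ^ k * (1 - fps_X) ^ m"

lemma omX_pow_nth:
  "(((1 - fps_X) ^ m :: int fps) $ j = 0 \<or> j \<le> m) \<and> ((1 - fps_X) ^ m :: int fps) $ m = (-1) ^ m"
proof (induction m arbitrary: j)
  case 0
  then show ?case by (cases j) auto
next
  case (Suc m)
  have eq: "((1 - fps_X) ^ Suc m :: int fps) = (1 - fps_X) ^ m - fps_X * (1 - fps_X) ^ m"
    by (simp add: algebra_simps)
  have a: "((1 - fps_X) ^ m :: int fps) $ i = 0" if "i > m" for i
    using Suc.IH[of i] that by auto
  show ?case
  proof
    show "((1 - fps_X) ^ Suc m :: int fps) $ j = 0 \<or> j \<le> Suc m"
      using a[of j] a[of "j - 1"] unfolding eq by (auto simp: fps_sub_nth)
    show "((1 - fps_X) ^ Suc m :: int fps) $ Suc m = (-1) ^ Suc m"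
      using a[of "Suc m"] Suc.IH[of 0] unfolding eq by (simp add: fps_sub_nth)
  qed
qed

lemma T_nth_high: "i > k + m \<Longrightarrow> T k m $ i = 0"
  using omX_pow_nth[of m "i - k"] unfolding T_def
  by (auto simp: fps_X_power_mult_nth)

lemma T_nth_top: "T k m $ (k + m) = (-1) ^ m"
  using omX_pow_nth[of m] unfolding T_def
  by (auto simp: fps_X_power_mult_nth)

lemma T_nth_0: "k > 0 \<Longrightarrow> T k m $ 0 = 0"
  unfolding T_def by (auto simp: fps_X_power_mult_nth)

definition ones :: "int fps" where "ones = Abs_fps (\<lambda>_. 1)"

lemma ones_mult: "ones * (1 - fps_X) = 1"
  by (rule fps_ext) (auto simp: ones_def algebra_simps fps_sub_nth fps_mult_nth_0 simp del: fps_mult_nth_0)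

lemma prod_ones: "finite A \<Longrightarrow> (\<Prod>x\<in>A. ones) = Abs_fps (\<lambda>n. int (card (multisets_of_size A n)))"
proof (rule fps_ext)
  fix n assume f: "finite A"
  show "(\<Prod>x\<in>A. ones) $ n = Abs_fps (\<lambda>n. int (card (multisets_of_size A n))) $ n"
    unfolding fps_prod_nth'[OF f] by (simp add: ones_def)
qed

lemma mos_mult: "finite A \<Longrightarrow> Abs_fps (\<lambda>n. int (card (multisets_of_size A n))) * (1 - fps_X) ^ card A = 1"
proof -
  assume f: "finite A"
  have "(\<Prod>x\<in>A. ones) * (1 - fps_X) ^ card A = (\<Prod>x\<in>A. ones * (1 - fps_X))"
    by (simp add: power_mult_distrib)
  also have "\<dots> = 1" by (simp add: ones_mult)
  finally show ?thesis using prod_ones[OF f] by simp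
qed

lemma mset_set_sub: "mset_set (set_mset m) \<subseteq># m"
  by (rule mset_set_set_mset_msubset)

lemma exact_count:
  assumes f: "finite A"
  shows "card {m. set_mset m = A \<and> size m = d} =
         (if card A \<le> d then card (multisets_of_size A (d - card A)) else 0)"
proof (cases "card A \<le> d")
  case True
  have "bij_betw (\<lambda>m. m + mset_set A) (multisets_of_size A (d - card A)) {m. set_mset m = A \<and> size m = d}"
  proof (rule bij_betw_byWitness[where f' = "\<lambda>m. m - mset_set A"])
    show "\<forall>a\<in>multisets_of_size A (d - card A). a + mset_set A - mset_set A = a" by simp
    show "\<forall>a'\<in>{m. set_mset m = A \<and> size m = d}. a' - mset_set A + mset_set A = a'"
    proof
      fix a' assume "a' \<in> {m. set_mset m = A \<and> size m = d}"
      then have "mset_set A \<subseteq># a'" using mset_set_sub[of a'] by simp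
      then show "a' - mset_set A + mset_set A = a'" by (rule subset_mset.diff_add)
    qed
    show "(\<lambda>m. m + mset_set A) ` multisets_of_size A (d - card A) \<subseteq> {m. set_mset m = A \<and> size m = d}"
      using True f by (auto simp: multisets_of_size_def)
    show "(\<lambda>m. m - mset_set A) ` {m. set_mset m = A \<and> size m = d} \<subseteq> multisets_of_size A (d - card A)"
    proof
      fix x assume "x \<in> (\<lambda>m. m - mset_set A) ` {m. set_mset m = A \<and> size m = d}"
      then obtain m where m: "set_mset m = A" "size m = d" and x: "x = m - mset_set A" by auto
      have "size x = size m - size (mset_set A)" unfolding x
        using mset_set_sub[of m] m by (simp add: size_Diff_submset)
      moreover have "set_mset x \<subseteq> A" unfolding x using m by (auto dest: in_diffD)
      ultimately show "x \<in> multisets_of_size A (d - card A)" using m by (simp add: multisets_of_size_def)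
    qed
  qed
  then show ?thesis using True by (simp add: bij_betw_same_card)
next
  case False
  have "{m. set_mset m = A \<and> size m = d} = {}"
  proof (rule ccontr)
    assume "{m. set_mset m = A \<and> size m = d} \<noteq> {}"
    then obtain m where m: "set_mset m = A" "size m = d" by auto
    have "size (mset_set A) \<le> size m" using mset_set_sub[of m] m by (intro size_mset_mono) simp
    then show False using False m f by simp
  qed
  then show ?thesis using False by (metis card.empty)
qed

definition Q :: "'a set \<Rightarrow> int fps" where
  "Q A = Abs_fps (\<lambda>d. int (card {m. set_mset m = A \<and> size m = d}))"

lemma Q_eq: "finite A \<Longrightarrow> Q A = fps_X ^ card A * Abs_fps (\<lambda>n. int (card (multisets_of_size A n)))"
  by (rule fps_ext) (auto simp: Q_def exact_count fps_X_power_mult_nth)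

lemma Q_mult: "finite A \<Longrightarrow> Q A * (1 - fps_X) ^ card A = fps_X ^ card A"
  by (simp add: Q_eq mult.assoc mos_mult)

lemma hf_decomp:
  assumes f: "finite V"
  shows "hilbert_fun V E d = (\<Sum>A\<in>{A. A \<subseteq> V \<and> indep E A}. card {m. set_mset m = A \<and> size m = d})"
proof -
  have eq: "{m. set_mset m \<subseteq> V \<and> indep E (set_mset m) \<and> size m = d} =
    (\<Union>A\<in>{A. A \<subseteq> V \<and> indep E A}. {m. set_mset m = A \<and> size m = d})" by auto
  have fin: "finite {m. set_mset m = A \<and> size m = d}" if "A \<in> {A. A \<subseteq> V \<and> indep E A}" for A
  proof (rule finite_subset[OF _ finite_multisets_of_size[of A d]])
    show "finite A" using that f finite_subset by auto
  qed (auto simp: multisets_of_size_def)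
  have finI: "finite {A. A \<subseteq> V \<and> indep E A}" using f by simp
  show ?thesis unfolding hilbert_fun_def eq
    by (rule card_UN_disjoint[OF finI]) (use fin in auto)
qed

lemma hs_decomp:
  assumes f: "finite V"
  shows "hilbert_series V E = (\<Sum>A\<in>{A. A \<subseteq> V \<and> indep E A}. Q A)"
  by (rule fps_ext) (simp add: hilbert_series_def hf_decomp[OF f] fps_sum_nth Q_def)

lemma card_le_indep_num:
  assumes f: "finite V" and A: "A \<subseteq> V" "indep E A"
  shows "card A \<le> indep_num V E"
  unfolding indep_num_def using f A by (intro Max_ge) auto

lemma h_decomp:
  assumes f: "finite V"
  shows "h_fps V E = (\<Sum>A\<in>{A. A \<subseteq> V \<and> indep E A}. T (card A) (indep_num V E - card A))"
proof -
  have "h_fps V E = (\<Sum>A\<in>{A. A \<subseteq> V \<and> indep E A}. Q A * (1 - fps_X) ^ indep_num V E)"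
    unfolding h_fps_def hs_decomp[OF f] by (simp add: sum_distrib_right)
  also have "\<dots> = (\<Sum>A\<in>{A. A \<subseteq> V \<and> indep E A}. T (card A) (indep_num V E - card A))"
  proof (rule sum.cong)
    fix A assume A: "A \<in> {A. A \<subseteq> V \<and> indep E A}"
    then have le: "card A \<le> indep_num V E" using card_le_indep_num[OF f] by auto
    have fA: "finite A" using A f finite_subset by auto
    have "(1 - fps_X :: int fps) ^ indep_num V E = (1 - fps_X) ^ card A * (1 - fps_X) ^ (indep_num V E - card A)"
      using le by (simp flip: power_add)
    then show "Q A * (1 - fps_X) ^ indep_num V E = T (card A) (indep_num V E - card A)"
      unfolding T_def using Q_mult[OF fA] by (metis mult.assoc)
  qed simp
  finally show ?thesis .
qed

lemma h_high:
  assumes f: "finite V" and i: "i > indep_num V E"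
  shows "h_fps V E $ i = 0"
proof -
  have "h_fps V E $ i = (\<Sum>A\<in>{A. A \<subseteq> V \<and> indep E A}. T (card A) (indep_num V E - card A) $ i)"
    unfolding h_decomp[OF f] fps_sum_nth ..
  also have "\<dots> = 0"
  proof (rule sum.neutral, rule ballI)
    fix A assume A: "A \<in> {A. A \<subseteq> V \<and> indep E A}"
    then have "card A \<le> indep_num V E" using card_le_indep_num[OF f] by auto
    then show "T (card A) (indep_num V E - card A) $ i = 0" using i by (intro T_nth_high) simp
  qed
  finally show ?thesis .
qed

lemma h_0:
  assumes f: "finite V" and ne: "\<forall>e\<in>E. e \<noteq> {}"
  shows "h_fps V E $ 0 = 1"
proof -
  have "{m. set_mset m \<subseteq> V \<and> indep E (set_mset m) \<and> size m = 0} = {{#}}"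
    using ne by (auto simp: indep_def)
  then have "hilbert_fun V E 0 = 1" by (simp add: hilbert_fun_def)
  then show ?thesis by (simp add: h_fps_def hilbert_series_def fps_nth_power_0)
qed

lemma pg_char_gen:
  fixes f :: "int fps"
  assumes hi: "\<forall>i>a. f $ i = 0" and z: "f $ 0 = 1"
  shows "(f $ Max {i. f $ i \<noteq> 0} = 1 \<and> Max {i. f $ i \<noteq> 0} = a) \<longleftrightarrow> f $ a = 1"
proof -
  have sub: "{i. f $ i \<noteq> 0} \<subseteq> {..a}" using hi by (auto simp: not_le[symmetric])
  then have fin: "finite {i. f $ i \<noteq> 0}" by (rule finite_subset) simp
  show ?thesis
  proof
    assume "f $ Max {i. f $ i \<noteq> 0} = 1 \<and> Max {i. f $ i \<noteq> 0} = a"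
    then show "f $ a = 1" by metis
  next
    assume a: "f $ a = 1"
    have "Max {i. f $ i \<noteq> 0} = a"
      by (rule Max_eqI[OF fin]) (use sub a in auto)
    then show "f $ Max {i. f $ i \<noteq> 0} = 1 \<and> Max {i. f $ i \<noteq> 0} = a" using a by simp
  qed
qed

lemma pg_char:
  assumes f: "finite V" and ne: "\<forall>e\<in>E. e \<noteq> {}"
  shows "pseudo_gorenstein_star V E \<longleftrightarrow> h_fps V E $ indep_num V E = 1"
proof -
  have "pseudo_gorenstein_star V E \<longleftrightarrow>
     (h_fps V E $ Max {i. h_fps V E $ i \<noteq> 0} = 1 \<and> Max {i. h_fps V E $ i \<noteq> 0} = indep_num V E)"
    unfolding pseudo_gorenstein_star_def a_inv_def h_deg_def by auto
  also have "\<dots> \<longleftrightarrow> h_fps V E $ indep_num V E = 1"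
    by (rule pg_char_gen) (use h_high[OF f] h_0[OF f ne] in auto)
  finally show ?thesis .
qed

lemma alt_sum:
  assumes "finite S" "S \<noteq> {}"
  shows "(\<Sum>B\<in>Pow S. (-1::int) ^ card B) = 0"
proof -
  have "(\<Prod>x\<in>S. (-1::int) + 1) = (\<Sum>X\<in>Pow S. (\<Prod>x\<in>X. (-1::int)) * (\<Prod>x\<in>S-X. 1))"
    by (rule prod_add) fact
  moreover have "card S > 0" using assms card_gt_0_iff by blast
  then have "(0::int) ^ card S = 0" by simp
  ultimately show ?thesis by simp
qed

lemma neg_pow_diff: "b \<le> n \<Longrightarrow> (-1::int) ^ (n - b) = (-1) ^ n * (-1) ^ b"
proof -
  assume "b \<le> n"
  then have "(-1::int) ^ n = (-1) ^ (n - b) * (-1) ^ b" by (simp flip: power_add)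
  then have "(-1::int) ^ n * (-1) ^ b = (-1) ^ (n - b) * ((-1) ^ b * (-1) ^ b)" by simp
  also have "(-1::int) ^ b * (-1) ^ b = 1" by (simp flip: power_add)
  finally show ?thesis by simp
qed

theorem theorem5p3:
  fixes V :: "'a set" and E :: "'a set set" and C :: "'a set" and z :: 'a
  assumes "simple_graph V E"
    and "indep_num V E \<ge> 2"
    and "vertex_cover V E C"
    and "1 \<le> card (V - C)"
    and "card (V - C) \<le> indep_num V E - 1"
    and "z \<notin> V"
  shows "pseudo_gorenstein_star V E \<longleftrightarrow>
         pseudo_gorenstein_star (insert z V) (suspension_edges E C z)"
proof -
  note sg = assms(1) and a2 = assms(2) and vc = assms(3) and s1 = assms(4) and s2 = assms(5) and zV = assms(6)
  define S where "S = V - C"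
  define E' where "E' = suspension_edges E C z"
  define a where "a = indep_num V E"
  define I where "I = {A. A \<subseteq> V \<and> indep E A}"
  define I' where "I' = {A. A \<subseteq> insert z V \<and> indep E' A}"
  have fV: "finite V" using sg by (simp add: simple_graph_def)
  have fS: "finite S" using fV by (simp add: S_def)
  have Sne: "S \<noteq> {}" using s1 unfolding S_def by (metis card.empty not_one_le_zero)
  have CV: "C \<subseteq> V" using vc by (simp add: vertex_cover_def)
  have eC: "\<And>e. e \<in> E \<Longrightarrow> e \<inter> C \<noteq> {}" using vc by (simp add: vertex_cover_def)
  have eV: "\<And>e. e \<in> E \<Longrightarrow> e \<subseteq> V" using sg by (simp add: simple_graph_def)
  have ne: "\<forall>e\<in>E. e \<noteq> {}" using eC by auto
  have ne': "\<forall>e\<in>E'. e \<noteq> {}" using ne by (auto simp: E'_def suspension_edges_def)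
  have fI: "finite I" using fV by (simp add: I_def)
  have fPS: "finite ((insert z) ` Pow S)" using fS by simp
  have I'eq: "I' = I \<union> (insert z) ` Pow S"
  proof
    show "I' \<subseteq> I \<union> (insert z) ` Pow S"
    proof
      fix A assume A: "A \<in> I'"
      then have AV: "A \<subseteq> insert z V" and iA: "indep E' A" by (auto simp: I'_def)
      show "A \<in> I \<union> (insert z) ` Pow S"
      proof (cases "z \<in> A")
        case False
        then have "A \<subseteq> V" using AV by auto
        moreover have "indep E A" using iA by (auto simp: indep_def E'_def suspension_edges_def)
        ultimately show ?thesis by (auto simp: I_def)
      next
        case True
        have "c \<notin> A" if "c \<in> C" for c
        proof
          assume "c \<in> A"
          then have "{z, c} \<subseteq> A" using True by auto
          moreover have "{z, c} \<in> E'" using that by (auto simp: E'_def suspension_edges_def)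
          ultimately show False using iA by (auto simp: indep_def)
        qed
        then have "A - {z} \<subseteq> S" using AV by (auto simp: S_def)
        moreover have "A = insert z (A - {z})" using True by auto
        ultimately show ?thesis by blast
      qed
    qed
  next
    show "I \<union> (insert z) ` Pow S \<subseteq> I'"
    proof
      fix A assume "A \<in> I \<union> (insert z) ` Pow S"
      then show "A \<in> I'"
      proof
        assume A: "A \<in> I"
        then have "z \<notin> A" using zV by (auto simp: I_def)
        then show ?thesis using A by (auto simp: I_def I'_def indep_def E'_def suspension_edges_def)
      next
        assume "A \<in> (insert z) ` Pow S"
        then obtain B where B: "B \<subseteq> S" and A: "A = insert z B" by auto
        have "\<not> e \<subseteq> A" if "e \<in> E'" for e
        proof
          assume eA: "e \<subseteq> A"
          from that consider "e \<in> E" | c where "c \<in> C" "e = {z, c}"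
            by (auto simp: E'_def suspension_edges_def)
          then show False
          proof cases
            case 1
            then have "e \<subseteq> B" using eA A eV[OF 1] zV by auto
            then show False using eC[OF 1] B by (auto simp: S_def)
          next
            case 2
            then have "c \<in> B" using eA A CV zV by auto
            then show False using 2 B by (auto simp: S_def)
          qed
        qed
        then show ?thesis using A B by (auto simp: I'_def indep_def S_def)
      qed
    qed
  qed
  have disj: "I \<inter> (insert z) ` Pow S = {}" using zV by (auto simp: I_def)
  have emI: "{} \<in> I" using ne by (auto simp: I_def indep_def)
  have aI: "a \<in> card ` I" unfolding a_def indep_num_def I_def
    using fI emI by (intro Max_in) (auto simp: I_def)
  have cardB: "card (insert z B) = card B + 1" if "B \<subseteq> S" for B
  proof -
    have "finite B" using that fS by (rule finite_subset)
    moreover have "z \<notin> B" using that zV by (auto simp: S_def)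
    ultimately show ?thesis by simp
  qed
  have a': "indep_num (insert z V) E' = a"
    unfolding indep_num_def I'_def[symmetric]
  proof (rule Max_eqI)
    show "finite (card ` I')" using fI fPS I'eq by simp
    show "a \<in> card ` I'" using aI I'eq by auto
    fix y assume "y \<in> card ` I'"
    then obtain A where A: "A \<in> I'" and y: "y = card A" by auto
    show "y \<le> a"
    proof (cases "A \<in> I")
      case True
      then show ?thesis using card_le_indep_num[OF fV] y by (auto simp: I_def a_def)
    next
      case False
      then obtain B where B: "B \<subseteq> S" and AB: "A = insert z B" using A I'eq by auto
      have "card B \<le> card S" using B fS by (simp add: card_mono)
      then show ?thesis using y AB cardB[OF B] s2 a2 by (simp add: a_def S_def)
    qed
  qed
  have hG: "h_fps V E $ a = (\<Sum>A\<in>I. T (card A) (a - card A) $ a)"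
    unfolding h_decomp[OF fV] fps_sum_nth a_def I_def ..
  have fV': "finite (insert z V)" using fV by simp
  have "h_fps (insert z V) E' $ a = (\<Sum>A\<in>I'. T (card A) (a - card A) $ a)"
    unfolding h_decomp[OF fV'] fps_sum_nth a' I'_def ..
  also have "\<dots> = (\<Sum>A\<in>I. T (card A) (a - card A) $ a) + (\<Sum>A\<in>(insert z) ` Pow S. T (card A) (a - card A) $ a)"
    unfolding I'eq by (rule sum.union_disjoint[OF fI fPS disj])
  also have "(\<Sum>A\<in>(insert z) ` Pow S. T (card A) (a - card A) $ a) = (\<Sum>B\<in>Pow S. T (card (insert z B)) (a - card (insert z B)) $ a)"
  proof (rule sum.reindex[unfolded comp_def])
    show "inj_on (insert z) (Pow S)" using zV by (auto simp: inj_on_def S_def)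
  qed
  also have "\<dots> = (\<Sum>B\<in>Pow S. (-1) ^ (a - 1) * (-1) ^ card B)"
  proof (rule sum.cong[OF refl])
    fix B assume B: "B \<in> Pow S"
    have le: "card B \<le> card S" using B fS by (simp add: card_mono)
    have cB: "card (insert z B) = card B + 1" using cardB B by simp
    have "card B + 1 \<le> a" using le s2 a2 by (simp add: a_def S_def)
    then have eq: "card (insert z B) + (a - card (insert z B)) = a" unfolding cB by simp
    have "T (card (insert z B)) (a - card (insert z B)) $ a = (-1) ^ (a - card (insert z B))"
      using T_nth_top[of "card (insert z B)" "a - card (insert z B)"] unfolding eq .
    also have "\<dots> = (-1) ^ (a - 1 - card B)" using cB by simp
    also have "\<dots> = (-1) ^ (a - 1) * (-1) ^ card B"
      using le s2 by (intro neg_pow_diff) (simp add: a_def S_def)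
    finally show "T (card (insert z B)) (a - card (insert z B)) $ a = (-1) ^ (a - 1) * (-1) ^ card B" .
  qed
  also have "\<dots> = 0" using alt_sum[OF fS Sne] by (simp flip: sum_distrib_left)
  finally have hH: "h_fps (insert z V) E' $ a = h_fps V E $ a" using hG by simp
  show ?thesis
    unfolding E'_def[symmetric] pg_char[OF fV ne] pg_char[OF fV' ne'] a' a_def[symmetric] hH ..
qed

end
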